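(* Let $G$ be a locally compact abelian group, $\gamma\in\Gamma$ and $c>0$. For each $g\in L^2_{\mu_G}(G)$ there exists a unique $u_g\in\mathcal H^{c,\infty}(G)$ with $L_cu_g=g$, and moreover \[ \|u_g\|_{\mathcal H^{c,\infty}(G)}=\|g\|_{L^2_{\mu_G}(G)}. \]
   Context: $G$ is a locally compact abelian group with Haar measure $\mu_G$; $G^\wedge$ is its dual group (continuous homomorphisms $G\to\{z\in\mathbb C:|z|=1\}$, a locally compact abelian group under pointwise multiplication) with Haar measure $\mu_{G^\wedge}$ normalized so that the Plancherel theorem and Fourier inversion hold. $\mathcal F$ denotes the Fourier transform $L^2_{\mu_G}(G)\to L^2(G^\wedge)$ (given for $f\in L^1\cap L^2$ by $\mathcal F f(\xi)=\int_G\overline{\xi(x)}f(x)\,d\mu_G(x)$) and $\mathcal F^{-1}$ its inverse. $\Gamma$ is the set of functions $\gamma:G^\wedge\to[0,\infty)$ for which there is a constant $c_\gamma$ with $\gamma(\alpha\beta)\le c_\gamma[\gamma(\alpha)+\gamma(\beta)]$ for all $\alpha,\beta\in G^\wedge$. For $c>0$, $\mathcal H^{c,\infty}(G)$ is the set of $f\in L^2_{\mu_G}(G)$ with $\|f\|_{\mathcal H^{c,\infty}(G)}=\left(\int_{G^\wedge}\left(1+\gamma(\xi)^2e^{c\gamma(\xi)^2}\right)^2|\mathcal F f(\xi)|^2\,d\mu_{G^\wedge}(\xi)\right)^{1/2}<\infty$. The operator $L_c$ (formally $\Delta e^{-c\Delta}-\mathrm{Id}$) is defined on $\mathcal H^{c,\infty}(G)$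 by $L_cu=-\mathcal F^{-1}\big((1+\gamma(\xi)^2e^{c\gamma(\xi)^2})\,\mathcal F u(\xi)\big)$. *)

theory Defs
  imports "HOL-Analysis.Analysis"
begin

definition borel_of :: "'a topology \<Rightarrow> 'a measure" where
  "borel_of X = sigma (topspace X) {U. openin X U}"

definition radon_measure_on :: "'a topology \<Rightarrow> 'a measure \<Rightarrow> bool" where
  "radon_measure_on X M \<longleftrightarrow>
     space M = topspace X \<and> sets M = sets (borel_of X) \<and>
     (\<forall>K. compactin X K \<longrightarrow> emeasure M K < \<infinity>) \<and>
     (\<forall>A\<in>sets M. emeasure M A = (INF U\<in>{U. openin X U \<and> A \<subseteq> U}. emeasure M U)) \<and>
     (\<forall>U. openin X U \<longrightarrow> emeasure M U = (SUP K\<in>{K. compactin X K \<and> K \<subseteq> U}. emeasure M K))"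

definition haar_measure_on :: "'a topology \<Rightarrow> ('a \<Rightarrow> 'a \<Rightarrow> 'a) \<Rightarrow> 'a measure \<Rightarrow> bool" where
  "haar_measure_on X gmult M \<longleftrightarrow>
     radon_measure_on X M \<and>
     (\<forall>a\<in>topspace X. \<forall>A\<in>sets M. emeasure M (gmult a ` A) = emeasure M A) \<and>
     emeasure M (topspace X) \<noteq> 0"

text \<open>A locally compact (Hausdorff) abelian topological group, realised as a type
  with its type-class topology.\<close>
definition LCA_group :: "'g::{ab_group_add, t2_space} itself \<Rightarrow> bool" where
  "LCA_group _ \<longleftrightarrow>
     continuous_on UNIV (\<lambda>p::'g \<times> 'g. fst p - snd p) \<and>
     locally_compact_space (euclidean :: 'g topology)"

definition dual_group :: "('g::{ab_group_add, topological_space} \<Rightarrow> complex) set" where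
  "dual_group = {\<xi>. continuous_on UNIV \<xi> \<and> (\<forall>x. cmod (\<xi> x) = 1) \<and>
                     (\<forall>x y. \<xi> (x + y) = \<xi> x * \<xi> y)}"

definition dual_mult :: "('g \<Rightarrow> complex) \<Rightarrow> ('g \<Rightarrow> complex) \<Rightarrow> ('g \<Rightarrow> complex)" where
  "dual_mult \<alpha> \<beta> = (\<lambda>x. \<alpha> x * \<beta> x)"

text \<open>Compact-open topology on the dual (= topology of uniform convergence on
  compact sets), generated by the sets of characters uniformly eps-close to eta on K.\<close>
definition dual_topology :: "('g::{ab_group_add, topological_space} \<Rightarrow> complex) topology" where
  "dual_topology = topology_generated_by
     {{\<xi>\<in>dual_group. \<forall>x\<in>K. cmod (\<xi> x - \<eta> x) < e} | \<eta> K e.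
        \<eta> \<in> dual_group \<and> compact K \<and> e > 0}"

definition L2 :: "'a measure \<Rightarrow> ('a \<Rightarrow> complex) set" where
  "L2 M = {f. f \<in> borel_measurable M \<and> integrable M (\<lambda>x. (cmod (f x))\<^sup>2)}"

definition L2_norm :: "'a measure \<Rightarrow> ('a \<Rightarrow> complex) \<Rightarrow> real" where
  "L2_norm M f = sqrt (\<integral>x. (cmod (f x))\<^sup>2 \<partial>M)"

definition fourier :: "'g measure \<Rightarrow> ('g \<Rightarrow> complex) \<Rightarrow> ('g \<Rightarrow> complex) \<Rightarrow> complex" where
  "fourier \<mu> f = (\<lambda>\<xi>. \<integral>x. cnj (\<xi> x) * f x \<partial>\<mu>)"

definition L1_L2 :: "'a measure \<Rightarrow> ('a \<Rightarrow> complex) set" where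
  "L1_L2 M = {f \<in> L2 M. integrable M f}"

text \<open>fourier_L2 mu nu f h: h is (a representative of) the L2 Fourier transform of f,
  i.e. the L2-limit of the Fourier transforms of any L1 \<inter> L2 approximants of f.\<close>
definition fourier_L2 ::
  "'g measure \<Rightarrow> ('g \<Rightarrow> complex) measure \<Rightarrow> ('g \<Rightarrow> complex) \<Rightarrow> (('g \<Rightarrow> complex) \<Rightarrow> complex) \<Rightarrow> bool" where
  "fourier_L2 \<mu> \<nu> f h \<longleftrightarrow> f \<in> L2 \<mu> \<and> h \<in> L2 \<nu> \<and>
     (\<forall>\<phi>::nat \<Rightarrow> 'g \<Rightarrow> complex. (\<forall>n. \<phi> n \<in> L1_L2 \<mu>) \<longrightarrow>
        (\<lambda>n. L2_norm \<mu> (\<lambda>x. \<phi> n x - f x)) \<longlonglongrightarrow> 0 \<longrightarrow>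
        (\<lambda>n. L2_norm \<nu> (\<lambda>\<xi>. fourier \<mu> (\<phi> n) \<xi> - h \<xi>)) \<longlonglongrightarrow> 0)"

text \<open>Standing assumptions: G locally compact abelian with Haar measure mu, nu a Haar
  measure on the dual group normalised so that Plancherel holds (F is an isometry on
  L1 \<inter> L2 whose L2-extension is onto L2 of the dual) and Fourier inversion holds.\<close>
definition plancherel_setting ::
  "'g::{ab_group_add, t2_space} measure \<Rightarrow> ('g \<Rightarrow> complex) measure \<Rightarrow> bool" where
  "plancherel_setting \<mu> \<nu> \<longleftrightarrow>
     LCA_group TYPE('g) \<and>
     haar_measure_on euclidean (+) \<mu> \<and>
     haar_measure_on dual_topology dual_mult \<nu> \<and>
     (\<forall>f\<in>L1_L2 \<mu>. fourier \<mu> f \<in> L2 \<nu> \<and> L2_norm \<nu> (fourier \<mu> f) = L2_norm \<mu> f) \<and>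
     (\<forall>h\<in>L2 \<nu>. \<exists>f. fourier_L2 \<mu> \<nu> f h) \<and>
     (\<forall>f\<in>L1_L2 \<mu>. integrable \<nu> (fourier \<mu> f) \<longrightarrow>
        (AE x in \<mu>. f x = (\<integral>\<xi>. \<xi> x * fourier \<mu> f \<xi> \<partial>\<nu>)))"

definition Gamma_class :: "(('g::{ab_group_add, topological_space} \<Rightarrow> complex) \<Rightarrow> real) set" where
  "Gamma_class = {\<gamma>. (\<forall>\<alpha>\<in>dual_group. \<gamma> \<alpha> \<ge> 0) \<and>
      (\<exists>C. \<forall>\<alpha>\<in>dual_group. \<forall>\<beta>\<in>dual_group. \<gamma> (dual_mult \<alpha> \<beta>) \<le> C * (\<gamma> \<alpha> + \<gamma> \<beta>))}"

definition weight :: "(('g \<Rightarrow> complex) \<Rightarrow> real) \<Rightarrow> real \<Rightarrow> ('g \<Rightarrow> complex) \<Rightarrow> real" where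
  "weight \<gamma> c \<xi> = 1 + (\<gamma> \<xi>)\<^sup>2 * exp (c * (\<gamma> \<xi>)\<^sup>2)"

definition H_space ::
  "'g measure \<Rightarrow> ('g \<Rightarrow> complex) measure \<Rightarrow> (('g \<Rightarrow> complex) \<Rightarrow> real) \<Rightarrow> real \<Rightarrow> ('g \<Rightarrow> complex) set" where
  "H_space \<mu> \<nu> \<gamma> c = {u \<in> L2 \<mu>. \<exists>h. fourier_L2 \<mu> \<nu> u h \<and>
       integrable \<nu> (\<lambda>\<xi>. (weight \<gamma> c \<xi>)\<^sup>2 * (cmod (h \<xi>))\<^sup>2)}"

definition H_norm ::
  "'g measure \<Rightarrow> ('g \<Rightarrow> complex) measure \<Rightarrow> (('g \<Rightarrow> complex) \<Rightarrow> real) \<Rightarrow> real \<Rightarrow> ('g \<Rightarrow> complex) \<Rightarrow> real" where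
  "H_norm \<mu> \<nu> \<gamma> c u =
     sqrt (\<integral>\<xi>. (weight \<gamma> c \<xi>)\<^sup>2 * (cmod ((SOME h. fourier_L2 \<mu> \<nu> u h) \<xi>))\<^sup>2 \<partial>\<nu>)"

text \<open>Lc_solves mu nu gamma c u g: L_c u = g, i.e.
  g = - F^{-1}(weight * F u), equivalently F g = - weight * F u.\<close>
definition Lc_solves ::
  "'g measure \<Rightarrow> ('g \<Rightarrow> complex) measure \<Rightarrow> (('g \<Rightarrow> complex) \<Rightarrow> real) \<Rightarrow> real \<Rightarrow>
   ('g \<Rightarrow> complex) \<Rightarrow> ('g \<Rightarrow> complex) \<Rightarrow> bool" where
  "Lc_solves \<mu> \<nu> \<gamma> c u g \<longleftrightarrow> u \<in> H_space \<mu> \<nu> \<gamma> c \<and>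
     (\<exists>h. fourier_L2 \<mu> \<nu> u h \<and>
          fourier_L2 \<mu> \<nu> g (\<lambda>\<xi>. - complex_of_real (weight \<gamma> c \<xi>) * h \<xi>))"

end

theory Submission
  imports Defs
begin


lemma sq_ineq:
  fixes x y t :: real
  assumes "x \<ge> 0" "y \<ge> 0" "t > 0"
  shows "(x + y)\<^sup>2 \<le> (1 + t) * x\<^sup>2 + (1 + 1/t) * y\<^sup>2"
proof -
  have "0 \<le> (t*x - y)\<^sup>2 / t" using assms by simp
  also have "(t*x - y)\<^sup>2 / t = t * x\<^sup>2 - 2*x*y + y\<^sup>2/t"
    using assms by (simp add: field_simps power2_eq_square)
  finally have h: "0 \<le> t * x\<^sup>2 - 2*x*y + y\<^sup>2/t" .
  have e1: "(x+y)\<^sup>2 = x\<^sup>2 + 2*x*y + y\<^sup>2" by (simp add: power2_eq_square algebra_simps)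
  have e2: "(1 + t) * x\<^sup>2 + (1 + 1/t) * y\<^sup>2 = x\<^sup>2 + t*x\<^sup>2 + y\<^sup>2 + y\<^sup>2/t"
    by (simp add: algebra_simps add_divide_distrib)
  show ?thesis using h e1 e2 by linarith
qed

lemma cmod_sq_ineq:
  fixes a b :: complex
  assumes "t > 0"
  shows "(cmod (a + b))\<^sup>2 \<le> (1 + t) * (cmod a)\<^sup>2 + (1 + 1/t) * (cmod b)\<^sup>2"
proof -
  have "(cmod (a + b))\<^sup>2 \<le> (cmod a + cmod b)\<^sup>2"
    by (simp add: norm_triangle_ineq power_mono)
  also have "\<dots> \<le> (1 + t) * (cmod a)\<^sup>2 + (1 + 1/t) * (cmod b)\<^sup>2" by (rule sq_ineq) (use assms in auto)
  finally show ?thesis .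
qed

lemma L2_measurable: "f \<in> L2 M \<Longrightarrow> f \<in> borel_measurable M"
  by (simp add: L2_def)

lemma L2_integrable: "f \<in> L2 M \<Longrightarrow> integrable M (\<lambda>x. (cmod (f x))\<^sup>2)"
  by (simp add: L2_def)

lemma L2_add:
  assumes "f \<in> L2 M" "g \<in> L2 M"
  shows "(\<lambda>x. f x + g x) \<in> L2 M"
proof -
  have m: "f \<in> borel_measurable M" "g \<in> borel_measurable M" using assms by (simp_all only: L2_def mem_Collect_eq)
  have fi: "integrable M (\<lambda>x. (cmod (f x))\<^sup>2)" "integrable M (\<lambda>x. (cmod (g x))\<^sup>2)"
    using assms by (simp_all only: L2_def mem_Collect_eq)
  have i2: "integrable M (\<lambda>x. 2 * (cmod (f x))\<^sup>2 + 2 * (cmod (g x))\<^sup>2)"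
    by (intro Bochner_Integration.integrable_add integrable_mult_right fi)
  have mf: "(\<lambda>x. f x + g x) \<in> borel_measurable M" using m by (rule borel_measurable_add)
  have m2: "(\<lambda>x. (cmod (f x + g x))\<^sup>2) \<in> borel_measurable M"
    using mf by measurable
  have b: "norm ((cmod (f x + g x))\<^sup>2) \<le> norm (2 * (cmod (f x))\<^sup>2 + 2 * (cmod (g x))\<^sup>2)" for x
  proof -
    have "(cmod (f x + g x))\<^sup>2 \<le> (1+1) * (cmod (f x))\<^sup>2 + (1 + 1/1) * (cmod (g x))\<^sup>2"
      by (rule cmod_sq_ineq) simp
    then show ?thesis by (simp only: real_norm_def abs_power2 abs_norm_cancel one_add_one div_by_1)
  qed
  have "integrable M (\<lambda>x. (cmod (f x + g x))\<^sup>2)"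
    by (rule Bochner_Integration.integrable_bound[OF i2 m2]) (rule AE_I2, rule b)
  then show ?thesis using mf by (simp only: L2_def mem_Collect_eq simp_thms)
qed

lemma L2_uminus:
  assumes "f \<in> L2 M" shows "(\<lambda>x. - f x) \<in> L2 M"
  using assms by (auto simp: L2_def)

lemma L2_diff:
  assumes "f \<in> L2 M" "g \<in> L2 M"
  shows "(\<lambda>x. f x - g x) \<in> L2 M"
  using L2_add[OF assms(1) L2_uminus[OF assms(2)]] by simp

lemma L2_zero: "(\<lambda>x. 0) \<in> L2 M"
  by (simp add: L2_def)

lemma L2_int_nonneg: "(\<integral>x. (cmod (f x))\<^sup>2 \<partial>M) \<ge> 0"
  by (rule Bochner_Integration.integral_nonneg) simp

lemma L2_norm_nonneg: "L2_norm M f \<ge> 0"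
  unfolding L2_norm_def using L2_int_nonneg by (rule real_sqrt_ge_zero)

lemma L2_norm_sq: "(L2_norm M f)\<^sup>2 = (\<integral>x. (cmod (f x))\<^sup>2 \<partial>M)"
  unfolding L2_norm_def using L2_int_nonneg by (rule real_sqrt_pow2)

lemma arith1:
  fixes A B :: real assumes "A > 0" "B > 0"
  shows "(1 + B/A) * A\<^sup>2 + (1 + 1/(B/A)) * B\<^sup>2 = (A + B)\<^sup>2"
proof -
  have "(1 + B/A) * A\<^sup>2 = A\<^sup>2 + A*B" using assms by (simp add: power2_eq_square distrib_right)
  moreover have "(1 + 1/(B/A)) * B\<^sup>2 = B\<^sup>2 + A*B" using assms by (simp add: power2_eq_square distrib_right)
  moreover have "(A + B)\<^sup>2 = A\<^sup>2 + 2*A*B + B\<^sup>2" by (simp add: power2_eq_square algebra_simps)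
  ultimately show ?thesis by simp
qed

lemma arith2:
  fixes B e :: real assumes "e > 0" "B > 0"
  shows "(1 + B\<^sup>2/e) * 0\<^sup>2 + (1 + 1/(B\<^sup>2/e)) * B\<^sup>2 = (0+B)\<^sup>2 + e"
proof -
  have "(1/(B\<^sup>2/e)) * B\<^sup>2 = e" using assms by simp
  then show ?thesis by (simp add: distrib_right)
qed

lemma arith3:
  fixes A e :: real assumes "e > 0" "A > 0"
  shows "(1 + e/A\<^sup>2) * A\<^sup>2 + (1 + 1/(e/A\<^sup>2)) * 0\<^sup>2 = (A+0)\<^sup>2 + e"
proof -
  have "(e/A\<^sup>2) * A\<^sup>2 = e" using assms by simp
  then show ?thesis by (simp add: distrib_right)
qed

lemma L2_norm_triangle:
  assumes "f \<in> L2 M" "g \<in> L2 M"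
  shows "L2_norm M (\<lambda>x. f x + g x) \<le> L2_norm M f + L2_norm M g"
proof -
  define A where "A = L2_norm M f"
  define B where "B = L2_norm M g"
  define X where "X = (\<integral>x. (cmod (f x + g x))\<^sup>2 \<partial>M)"
  have A0: "A \<ge> 0" unfolding A_def by (rule L2_norm_nonneg)
  have B0: "B \<ge> 0" unfolding B_def by (rule L2_norm_nonneg)
  have fi: "integrable M (\<lambda>x. (cmod (f x))\<^sup>2)" by (rule L2_integrable[OF assms(1)])
  have gi: "integrable M (\<lambda>x. (cmod (g x))\<^sup>2)" by (rule L2_integrable[OF assms(2)])
  have i1: "integrable M (\<lambda>x. (cmod (f x + g x))\<^sup>2)" by (rule L2_integrable[OF L2_add[OF assms]])
  have key: "X \<le> (1 + t) * A\<^sup>2 + (1 + 1/t) * B\<^sup>2" if t: "t > 0" for t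
  proof -
    have i2: "integrable M (\<lambda>x. (1 + t) * (cmod (f x))\<^sup>2 + (1 + 1/t) * (cmod (g x))\<^sup>2)"
      by (intro Bochner_Integration.integrable_add integrable_mult_right fi gi)
    have "X \<le> (\<integral>x. (1 + t) * (cmod (f x))\<^sup>2 + (1 + 1/t) * (cmod (g x))\<^sup>2 \<partial>M)"
      unfolding X_def by (rule integral_mono[OF i1 i2 cmod_sq_ineq[OF t]])
    also have "\<dots> = (\<integral>x. (1 + t) * (cmod (f x))\<^sup>2 \<partial>M) + (\<integral>x. (1 + 1/t) * (cmod (g x))\<^sup>2 \<partial>M)"
      by (intro Bochner_Integration.integral_add integrable_mult_right fi gi)
    also have "\<dots> = (1 + t) * (\<integral>x. (cmod (f x))\<^sup>2 \<partial>M) + (1 + 1/t) * (\<integral>x. (cmod (g x))\<^sup>2 \<partial>M)"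
      by (simp only: integral_mult_right_zero)
    also have "\<dots> = (1 + t) * A\<^sup>2 + (1 + 1/t) * B\<^sup>2"
      by (simp only: A_def B_def L2_norm_sq)
    finally show ?thesis .
  qed
  have "X \<le> (A + B)\<^sup>2"
  proof (cases "A > 0 \<and> B > 0")
    case True
    have "X \<le> (1 + B/A) * A\<^sup>2 + (1 + 1/(B/A)) * B\<^sup>2" by (rule key) (use True in simp)
    also have "\<dots> = (A + B)\<^sup>2" using True by (intro arith1) auto
    finally show ?thesis .
  next
    case False
    show ?thesis
    proof (rule field_le_epsilon)
      fix e :: real assume e: "e > 0"
      show "X \<le> (A + B)\<^sup>2 + e"
      proof (cases "A = 0")
        case True
        show ?thesis
        proof (cases "B = 0")
          case True
          have "X \<le> (1 + 1) * A\<^sup>2 + (1 + 1/1) * B\<^sup>2" by (rule key) simp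
          then show ?thesis using \<open>B = 0\<close> \<open>A = 0\<close> e by simp
        next
          case False
          then have Bp: "B > 0" using B0 by simp
          have "X \<le> (1 + B\<^sup>2/e) * A\<^sup>2 + (1 + 1/(B\<^sup>2/e)) * B\<^sup>2" by (rule key) (use Bp e in simp)
          also have "\<dots> = (A+B)\<^sup>2 + e" unfolding \<open>A = 0\<close> by (rule arith2[OF e Bp])
          finally show ?thesis .
        qed
      next
        case False
        then have Ap: "A > 0" using A0 by simp
        then have "B = 0" using \<open>\<not> (A > 0 \<and> B > 0)\<close> B0 by simp
        have "X \<le> (1 + e/A\<^sup>2) * A\<^sup>2 + (1 + 1/(e/A\<^sup>2)) * B\<^sup>2" by (rule key) (use Ap e in simp)
        also have "\<dots> = (A+B)\<^sup>2 + e" unfolding \<open>B = 0\<close> by (rule arith3[OF e Ap])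
        finally show ?thesis .
      qed
    qed
  qed
  then have "sqrt X \<le> sqrt ((A + B)\<^sup>2)" by (rule real_sqrt_le_mono)
  also have "sqrt ((A + B)\<^sup>2) = A + B" using A0 B0 by simp
  finally show ?thesis by (simp only: L2_norm_def X_def A_def B_def)
qed

definition d2 :: "'a measure \<Rightarrow> ('a \<Rightarrow> complex) \<Rightarrow> ('a \<Rightarrow> complex) \<Rightarrow> real" where
  "d2 M f g = L2_norm M (\<lambda>x. f x - g x)"

lemma d2_nonneg: "d2 M f g \<ge> 0" unfolding d2_def by (rule L2_norm_nonneg)

lemma d2_sym: "d2 M f g = d2 M g f"
  unfolding d2_def L2_norm_def by (simp only: norm_minus_commute)

lemma d2_self: "d2 M f f = 0"
  unfolding d2_def L2_norm_def by simp

lemma d2_triangle: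
  assumes "f \<in> L2 M" "g \<in> L2 M" "h \<in> L2 M"
  shows "d2 M f h \<le> d2 M f g + d2 M g h"
proof -
  have e: "(\<lambda>x. f x - h x) = (\<lambda>x. (f x - g x) + (g x - h x))" by simp
  have "d2 M f h = L2_norm M (\<lambda>x. (f x - g x) + (g x - h x))" unfolding d2_def e ..
  also have "\<dots> \<le> d2 M f g + d2 M g h"
    unfolding d2_def by (rule L2_norm_triangle[OF L2_diff[OF assms(1,2)] L2_diff[OF assms(2,3)]])
  finally show ?thesis .
qed

lemma L2_norm_d2: "L2_norm M f = d2 M f (\<lambda>x. 0)" by (simp add: d2_def)

lemma d2_zero_AE:
  assumes "f \<in> L2 M" "g \<in> L2 M" "d2 M f g = 0"
  shows "AE x in M. f x = g x"
proof -
  have i: "integrable M (\<lambda>x. (cmod (f x - g x))\<^sup>2)" by (rule L2_integrable[OF L2_diff[OF assms(1,2)]])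
  have "(L2_norm M (\<lambda>x. f x - g x))\<^sup>2 = 0" using assms(3) by (simp add: d2_def)
  then have "(\<integral>x. (cmod (f x - g x))\<^sup>2 \<partial>M) = 0" by (simp only: L2_norm_sq)
  then have "AE x in M. (cmod (f x - g x))\<^sup>2 = 0"
    using integral_nonneg_eq_0_iff_AE[OF i] by simp
  then show ?thesis by eventually_elim simp
qed

lemma d2_AE_cong:
  assumes "f \<in> L2 M" "f' \<in> L2 M" "g \<in> L2 M" "AE x in M. f x = f' x"
  shows "d2 M f g = d2 M f' g"
proof -
  have m1: "(\<lambda>x. (cmod (f x - g x))\<^sup>2) \<in> borel_measurable M"
    using L2_integrable[OF L2_diff[OF assms(1,3)]] by (rule borel_measurable_integrable)
  have m2: "(\<lambda>x. (cmod (f' x - g x))\<^sup>2) \<in> borel_measurable M"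
    using L2_integrable[OF L2_diff[OF assms(2,3)]] by (rule borel_measurable_integrable)
  have "(\<integral>x. (cmod (f x - g x))\<^sup>2 \<partial>M) = (\<integral>x. (cmod (f' x - g x))\<^sup>2 \<partial>M)"
    by (rule integral_cong_AE[OF m1 m2]) (use assms(4) in auto)
  then show ?thesis by (simp only: d2_def L2_norm_def)
qed

lemma L2_norm_diff_le:
  assumes "f \<in> L2 M" "g \<in> L2 M"
  shows "\<bar>L2_norm M f - L2_norm M g\<bar> \<le> d2 M f g"
proof -
  have 1: "d2 M f (\<lambda>x. 0) \<le> d2 M f g + d2 M g (\<lambda>x. 0)" by (rule d2_triangle[OF assms(1,2) L2_zero])
  have 2: "d2 M g (\<lambda>x. 0) \<le> d2 M g f + d2 M f (\<lambda>x. 0)" by (rule d2_triangle[OF assms(2,1) L2_zero])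
  show ?thesis using 1 2 d2_sym[of M f g] unfolding L2_norm_d2[of M f] L2_norm_d2[of M g] by linarith
qed




lemma L2_dense:
  assumes f: "f \<in> L2 M" and e: "e > 0"
  shows "\<exists>\<phi>\<in>L1_L2 M. d2 M \<phi> f < e"
proof -
  have m: "f \<in> borel_measurable M" using f by (simp only: L2_def mem_Collect_eq)
  have fi: "integrable M (\<lambda>x. (cmod (f x))\<^sup>2)" using f by (simp only: L2_def mem_Collect_eq)
  define \<phi> where "\<phi> n x = (if 1 / real (Suc n) \<le> cmod (f x) then f x else 0)" for n x
  have pm: "\<phi> n \<in> borel_measurable M" for n
    unfolding \<phi>_def using m by measurable
  have pL2: "\<phi> n \<in> L2 M" for n
  proof -
    have "integrable M (\<lambda>x. (cmod (\<phi> n x))\<^sup>2)"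
    proof (rule Bochner_Integration.integrable_bound[OF fi])
      show "(\<lambda>x. (cmod (\<phi> n x))\<^sup>2) \<in> borel_measurable M" using pm[of n] by measurable
      show "AE x in M. norm ((cmod (\<phi> n x))\<^sup>2) \<le> norm ((cmod (f x))\<^sup>2)"
        by (rule AE_I2) (simp add: \<phi>_def)
    qed
    then show ?thesis using pm[of n] by (simp only: L2_def mem_Collect_eq simp_thms)
  qed
  have pint: "integrable M (\<phi> n)" for n
  proof (rule Bochner_Integration.integrable_bound[where f="\<lambda>x. real (Suc n) * (cmod (f x))\<^sup>2"])
    show "integrable M (\<lambda>x. real (Suc n) * (cmod (f x))\<^sup>2)" by (intro integrable_mult_right fi)
    show "\<phi> n \<in> borel_measurable M" by (rule pm)
    show "AE x in M. norm (\<phi> n x) \<le> norm (real (Suc n) * (cmod (f x))\<^sup>2)"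
    proof (rule AE_I2)
      fix x
      show "norm (\<phi> n x) \<le> norm (real (Suc n) * (cmod (f x))\<^sup>2)"
      proof (cases "1 / real (Suc n) \<le> cmod (f x)")
        case True
        then have "1 \<le> real (Suc n) * cmod (f x)" by (simp add: field_simps)
        then have "cmod (f x) * 1 \<le> cmod (f x) * (real (Suc n) * cmod (f x))"
          by (intro mult_left_mono) auto
        then show ?thesis using True by (simp add: \<phi>_def power2_eq_square mult_ac)
      next
        case False
        then show ?thesis by (simp add: \<phi>_def)
      qed
    qed
  qed
  have lim: "(\<lambda>n. \<integral>x. (cmod (\<phi> n x - f x))\<^sup>2 \<partial>M) \<longlonglongrightarrow> (\<integral>x. 0 \<partial>M)"
  proof (rule integral_dominated_convergence[where w="\<lambda>x. (cmod (f x))\<^sup>2"])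
    show "(\<lambda>x. 0::real) \<in> borel_measurable M" by simp
    show "(\<lambda>x. (cmod (\<phi> n x - f x))\<^sup>2) \<in> borel_measurable M" for n using pm[of n] m by measurable
    show "integrable M (\<lambda>x. (cmod (f x))\<^sup>2)" by (rule fi)
    show "AE x in M. norm ((cmod (\<phi> n x - f x))\<^sup>2) \<le> (cmod (f x))\<^sup>2" for n
      by (rule AE_I2) (simp add: \<phi>_def)
    show "AE x in M. (\<lambda>n. (cmod (\<phi> n x - f x))\<^sup>2) \<longlonglongrightarrow> 0"
    proof (rule AE_I2)
      fix x
      show "(\<lambda>n. (cmod (\<phi> n x - f x))\<^sup>2) \<longlonglongrightarrow> 0"
      proof (cases "f x = 0")
        case True
        then show ?thesis by (simp add: \<phi>_def)
      next
        case False
        then have p: "cmod (f x) > 0" by simp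
        obtain N where N: "inverse (real (Suc N)) < cmod (f x)"
          using reals_Archimedean[OF p] by blast
        have "eventually (\<lambda>n. (cmod (\<phi> n x - f x))\<^sup>2 = 0) sequentially"
        proof (rule eventually_sequentiallyI[of N])
          fix n assume "N \<le> n"
          then have "1 / real (Suc n) \<le> 1 / real (Suc N)"
            by (intro divide_left_mono) auto
          with N have "1 / real (Suc n) \<le> cmod (f x)" by (simp add: inverse_eq_divide)
          then show "(cmod (\<phi> n x - f x))\<^sup>2 = 0" by (simp add: \<phi>_def)
        qed
        then show ?thesis by (rule tendsto_eventually)
      qed
    qed
  qed
  then have "(\<lambda>n. sqrt (\<integral>x. (cmod (\<phi> n x - f x))\<^sup>2 \<partial>M)) \<longlonglongrightarrow> sqrt 0"
    by (intro tendsto_real_sqrt) simp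
  then have "(\<lambda>n. d2 M (\<phi> n) f) \<longlonglongrightarrow> 0" by (simp add: d2_def L2_norm_def)
  then obtain n where "d2 M (\<phi> n) f < e" using e by (metis LIMSEQ_D d2_nonneg abs_of_nonneg diff_zero le_refl real_norm_def)
  moreover have "\<phi> n \<in> L1_L2 M" using pL2[of n] pint[of n] by (simp add: L1_L2_def)
  ultimately show ?thesis by blast
qed

lemma L2_dense_seq:
  assumes f: "f \<in> L2 M"
  shows "\<exists>\<psi>. (\<forall>n. \<psi> n \<in> L1_L2 M) \<and> (\<forall>n. d2 M (\<psi> n) f < (1/2)^n)"
proof -
  have "\<forall>n. \<exists>p. p \<in> L1_L2 M \<and> d2 M p f < (1/2)^n"
    using L2_dense[OF f] by (metis zero_less_divide_1_iff zero_less_numeral zero_less_power)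
  then show ?thesis by metis
qed

lemma d2_tendsto_geom:
  assumes "\<forall>n. d2 M (\<psi> n) f < (1/2)^n"
  shows "(\<lambda>n. d2 M (\<psi> n) f) \<longlonglongrightarrow> 0"
proof (rule tendsto_sandwich[of "\<lambda>n. 0" _ _ "\<lambda>n. (1/2::real)^n"])
  show "\<forall>\<^sub>F n in sequentially. 0 \<le> d2 M (\<psi> n) f" by (simp add: d2_nonneg)
  show "\<forall>\<^sub>F n in sequentially. d2 M (\<psi> n) f \<le> (1 / 2) ^ n" using assms by (simp add: less_imp_le)
  show "(\<lambda>n. 0::real) \<longlonglongrightarrow> 0" by simp
  show "(\<lambda>n. (1/2::real) ^ n) \<longlonglongrightarrow> 0" by (rule LIMSEQ_realpow_zero) auto
qed




lemma summable_diff_convergent: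
  fixes s :: "nat \<Rightarrow> complex"
  assumes "summable (\<lambda>n. cmod (s (Suc n) - s n))"
  shows "convergent s"
proof -
  have "summable (\<lambda>n. s (Suc n) - s n)" using assms by (rule summable_norm_cancel)
  then have "(\<lambda>n. \<Sum>i<n. s (Suc i) - s i) \<longlonglongrightarrow> (\<Sum>i. s (Suc i) - s i)" by (rule summable_LIMSEQ)
  then have "(\<lambda>n. s n - s 0) \<longlonglongrightarrow> (\<Sum>i. s (Suc i) - s i)" by (simp add: sum_lessThan_telescope)
  then have "(\<lambda>n. (s n - s 0) + s 0) \<longlonglongrightarrow> (\<Sum>i. s (Suc i) - s i) + s 0" by (intro tendsto_add) auto
  then show ?thesis unfolding convergent_def by auto
qed

lemma amgm_bound:
  fixes a q :: real assumes "a \<ge> 0" "q > 0"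
  shows "a \<le> q * a\<^sup>2 + 1/q"
proof -
  have "0 \<le> (q * a - 1)\<^sup>2 / q" using assms by simp
  also have "(q * a - 1)\<^sup>2 / q = q * a\<^sup>2 - 2 * a + 1/q"
    using assms by (simp add: power2_eq_square field_simps)
  finally show ?thesis using assms by simp
qed

lemma d2_chain:
  assumes s: "\<And>n. s n \<in> L2 M" and c: "\<And>n. d2 M (s (Suc n)) (s n) \<le> (1/2)^n"
  shows "n \<le> m \<Longrightarrow> d2 M (s m) (s n) \<le> 2 * (1/2)^n - 2 * (1/2)^m"
proof (induction m rule: dec_induct)
  case base
  then show ?case by (simp add: d2_self)
next
  case (step m)
  have "d2 M (s (Suc m)) (s n) \<le> d2 M (s (Suc m)) (s m) + d2 M (s m) (s n)"
    by (rule d2_triangle[OF s s s])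
  also have "\<dots> \<le> (1/2)^m + (2 * (1/2)^n - 2 * (1/2)^m)" using c[of m] step.IH by linarith
  finally show ?case by simp
qed

lemma L2_complete:
  assumes s: "\<And>n. s n \<in> L2 M" and c: "\<And>n. d2 M (s (Suc n)) (s n) \<le> (1/2)^n"
  shows "\<exists>k\<in>L2 M. (\<lambda>n. d2 M (s n) k) \<longlonglongrightarrow> 0"
proof -
  have sm: "s n \<in> borel_measurable M" for n using s[of n] by (simp only: L2_def mem_Collect_eq)
  define a where "a n x = cmod (s (Suc n) x - s n x)" for n x
  have am: "a n \<in> borel_measurable M" for n unfolding a_def using sm[of n] sm[of "Suc n"] by measurable
  have ai: "integrable M (\<lambda>x. (a n x)\<^sup>2)" for n
    unfolding a_def by (rule L2_integrable[OF L2_diff[OF s s]])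
  have aint: "(\<integral>x. (a n x)\<^sup>2 \<partial>M) \<le> (1/4)^n" for n
  proof -
    have "(\<integral>x. (a n x)\<^sup>2 \<partial>M) = (d2 M (s (Suc n)) (s n))\<^sup>2"
      unfolding a_def d2_def by (simp only: L2_norm_sq)
    also have "\<dots> \<le> ((1/2)^n)\<^sup>2" by (rule power_mono[OF c d2_nonneg])
    also have "\<dots> = (1/4)^n" by (simp add: power2_eq_square power_mult_distrib[symmetric])
    finally show ?thesis .
  qed
  define b where "b n x = ennreal (2^n * (a n x)\<^sup>2)" for n x
  have bm: "b n \<in> borel_measurable M" for n unfolding b_def using am[of n] by measurable
  have bint: "(\<integral>\<^sup>+x. b n x \<partial>M) \<le> ennreal ((1/2)^n)" for n
  proof -
    have "(\<integral>\<^sup>+x. b n x \<partial>M) = ennreal (\<integral>x. 2^n * (a n x)\<^sup>2 \<partial>M)"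
      unfolding b_def by (rule nn_integral_eq_integral) (auto intro: integrable_mult_right ai)
    also have "\<dots> = ennreal (2^n * (\<integral>x. (a n x)\<^sup>2 \<partial>M))" by simp
    also have "\<dots> \<le> ennreal (2^n * (1/4)^n)" by (intro ennreal_leI mult_left_mono aint) auto
    also have "2^n * (1/4::real)^n = (1/2)^n" by (simp add: power_mult_distrib[symmetric])
    finally show ?thesis .
  qed
  have "(\<integral>\<^sup>+x. (\<Sum>n. b n x) \<partial>M) = (\<Sum>n. \<integral>\<^sup>+x. b n x \<partial>M)"
    by (rule nn_integral_suminf[OF bm])
  also have "\<dots> \<le> (\<Sum>n. ennreal ((1/2)^n))" by (intro suminf_le bint) auto
  also have "\<dots> = ennreal (\<Sum>n. (1/2::real)^n)" by (rule suminf_ennreal2) auto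
  also have "\<dots> < \<infinity>" by simp
  finally have fin: "(\<integral>\<^sup>+x. (\<Sum>n. b n x) \<partial>M) \<noteq> \<infinity>" by simp
  have "AE x in M. (\<Sum>n. b n x) \<noteq> \<infinity>"
    by (rule nn_integral_PInf_AE[OF _ fin]) (use bm in measurable)
  then have conv: "AE x in M. convergent (\<lambda>n. s n x)"
  proof eventually_elim
    case (elim x)
    have "summable (\<lambda>n. 2^n * (a n x)\<^sup>2)"
      by (rule summable_suminf_not_top) (use elim in \<open>auto simp: b_def\<close>)
    moreover have "summable (\<lambda>n. (1/2::real)^n)" by (rule summable_geometric) simp
    ultimately have sg: "summable (\<lambda>n. 2^n * (a n x)\<^sup>2 + (1/2)^n)" by (rule summable_add)
    have bnd: "norm (a n x) \<le> 2^n * (a n x)\<^sup>2 + (1/2)^n" if "n \<ge> 0" for n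
    proof -
      have "a n x \<le> 2^n * (a n x)\<^sup>2 + 1/2^n" by (rule amgm_bound) (simp_all add: a_def)
      then show ?thesis by (simp add: a_def power_one_over)
    qed
    have "summable (\<lambda>n. a n x)"
      by (rule summable_comparison_test'[OF sg bnd])
    then show ?case unfolding a_def by (rule summable_diff_convergent)
  qed
  define k where "k x = lim (\<lambda>n. s n x)" for x
  have km: "k \<in> borel_measurable M" unfolding k_def using sm by measurable
  have klim: "AE x in M. (\<lambda>n. s n x) \<longlonglongrightarrow> k x"
    using conv by eventually_elim (simp add: k_def convergent_LIMSEQ_iff)
  have chain: "n \<le> m \<Longrightarrow> d2 M (s m) (s n) \<le> 2 * (1/2)^n - 2 * (1/2)^m" for n m
    by (rule d2_chain[OF s c])
  have tail: "(\<integral>\<^sup>+x. ennreal ((cmod (s n x - k x))\<^sup>2) \<partial>M) \<le> ennreal ((2 * (1/2)^n)\<^sup>2)" for n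
  proof -
    have "(\<integral>\<^sup>+x. ennreal ((cmod (s n x - k x))\<^sup>2) \<partial>M) =
          (\<integral>\<^sup>+x. liminf (\<lambda>m. ennreal ((cmod (s n x - s m x))\<^sup>2)) \<partial>M)"
    proof (rule nn_integral_cong_AE)
      show "AE x in M. ennreal ((cmod (s n x - k x))\<^sup>2) = liminf (\<lambda>m. ennreal ((cmod (s n x - s m x))\<^sup>2))"
        using klim
      proof eventually_elim
        case (elim x)
        have "(\<lambda>m. ennreal ((cmod (s n x - s m x))\<^sup>2)) \<longlonglongrightarrow> ennreal ((cmod (s n x - k x))\<^sup>2)"
          by (intro tendsto_ennrealI tendsto_power tendsto_norm tendsto_diff tendsto_const elim)
        then show ?case by (intro lim_imp_Liminf[symmetric]) auto
      qed
    qed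
    also have "\<dots> \<le> liminf (\<lambda>m. \<integral>\<^sup>+x. ennreal ((cmod (s n x - s m x))\<^sup>2) \<partial>M)"
      by (rule nn_integral_liminf) (use sm in measurable)
    also have "\<dots> \<le> ennreal ((2 * (1/2)^n)\<^sup>2)"
    proof (rule Liminf_le)
      show "sequentially \<noteq> bot" by simp
      show "\<forall>\<^sub>F m in sequentially. (\<integral>\<^sup>+x. ennreal ((cmod (s n x - s m x))\<^sup>2) \<partial>M) \<le> ennreal ((2 * (1/2)^n)\<^sup>2)"
      proof (rule eventually_sequentiallyI[of n])
        fix m assume nm: "n \<le> m"
        have "(\<integral>\<^sup>+x. ennreal ((cmod (s n x - s m x))\<^sup>2) \<partial>M) = ennreal (\<integral>x. (cmod (s n x - s m x))\<^sup>2 \<partial>M)"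
          by (rule nn_integral_eq_integral) (auto intro: L2_integrable[OF L2_diff[OF s s]])
        also have "(\<integral>x. (cmod (s n x - s m x))\<^sup>2 \<partial>M) = (d2 M (s n) (s m))\<^sup>2"
          unfolding d2_def by (simp only: L2_norm_sq)
        also have "\<dots> \<le> (2 * (1/2)^n)\<^sup>2"
        proof (rule power_mono[OF _ d2_nonneg])
          show "d2 M (s n) (s m) \<le> 2 * (1/2)^n" using chain[OF nm] d2_sym[of M "s n" "s m"] zero_le_power[of "1/2::real" m] by linarith
        qed
        finally show "(\<integral>\<^sup>+x. ennreal ((cmod (s n x - s m x))\<^sup>2) \<partial>M) \<le> ennreal ((2 * (1/2)^n)\<^sup>2)"
          by (simp add: ennreal_leI)
      qed
    qed
    finally show ?thesis .
  qed
  have dm: "(\<lambda>x. s n x - k x) \<in> borel_measurable M" for n using sm[of n] km by measurable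
  have dL2: "(\<lambda>x. s n x - k x) \<in> L2 M" for n
  proof -
    have "integrable M (\<lambda>x. (cmod (s n x - k x))\<^sup>2)"
      unfolding integrable_iff_bounded
    proof
      show "(\<lambda>x. (cmod (s n x - k x))\<^sup>2) \<in> borel_measurable M" using dm[of n] by measurable
      have "(\<integral>\<^sup>+x. ennreal (norm ((cmod (s n x - k x))\<^sup>2)) \<partial>M) = (\<integral>\<^sup>+x. ennreal ((cmod (s n x - k x))\<^sup>2) \<partial>M)"
        by simp
      also have "\<dots> \<le> ennreal ((2 * (1/2)^n)\<^sup>2)" by (rule tail)
      also have "\<dots> < \<infinity>" by simp
      finally show "(\<integral>\<^sup>+x. ennreal (norm ((cmod (s n x - k x))\<^sup>2)) \<partial>M) < \<infinity>" .
    qed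
    then show ?thesis using dm[of n] by (simp only: L2_def mem_Collect_eq simp_thms)
  qed
  have kL2: "k \<in> L2 M"
  proof -
    have "(\<lambda>x. s 0 x - (s 0 x - k x)) \<in> L2 M" by (rule L2_diff[OF s dL2])
    then show ?thesis by simp
  qed
  have dle: "d2 M (s n) k \<le> 2 * (1/2)^n" for n
  proof -
    have "(\<integral>x. (cmod (s n x - k x))\<^sup>2 \<partial>M) = enn2real (\<integral>\<^sup>+x. ennreal ((cmod (s n x - k x))\<^sup>2) \<partial>M)"
      by (rule integral_eq_nn_integral) (use dm[of n] in auto)
    also have "\<dots> \<le> (2 * (1/2)^n)\<^sup>2"
      using tail[of n] by (intro enn2real_leI) auto
    finally have "(d2 M (s n) k)\<^sup>2 \<le> (2 * (1/2)^n)\<^sup>2" unfolding d2_def by (simp only: L2_norm_sq)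
    then show ?thesis by (rule power2_le_imp_le) simp
  qed
  have "(\<lambda>n. d2 M (s n) k) \<longlonglongrightarrow> 0"
  proof (rule tendsto_sandwich[of "\<lambda>n. 0" _ _ "\<lambda>n. 2 * (1/2::real)^n"])
    show "\<forall>\<^sub>F n in sequentially. 0 \<le> d2 M (s n) k" by (simp add: d2_nonneg)
    show "\<forall>\<^sub>F n in sequentially. d2 M (s n) k \<le> 2 * (1 / 2) ^ n" using dle by simp
    show "(\<lambda>n. 0::real) \<longlonglongrightarrow> 0" by simp
    have "(\<lambda>n. 2 * (1/2::real) ^ n) \<longlonglongrightarrow> 2 * 0" by (intro tendsto_mult tendsto_const LIMSEQ_realpow_zero) auto
    then show "(\<lambda>n. 2 * (1/2::real) ^ n) \<longlonglongrightarrow> 0" by simp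
  qed
  then show ?thesis using kL2 by blast
qed




lemma lim_by_bound:
  fixes X e :: "nat \<Rightarrow> real"
  assumes "\<And>n. \<bar>X n - L\<bar> \<le> e n" "e \<longlonglongrightarrow> 0"
  shows "X \<longlonglongrightarrow> L"
proof (rule tendsto_sandwich[of "\<lambda>n. L - e n" _ _ "\<lambda>n. L + e n"])
  show "\<forall>\<^sub>F n in sequentially. L - e n \<le> X n" using assms(1) by (simp add: abs_le_iff algebra_simps)
  show "\<forall>\<^sub>F n in sequentially. X n \<le> L + e n" using assms(1) by (simp add: abs_le_iff algebra_simps)
  have "(\<lambda>n. L - e n) \<longlonglongrightarrow> L - 0" by (intro tendsto_diff tendsto_const assms(2))
  then show "(\<lambda>n. L - e n) \<longlonglongrightarrow> L" by simp
  have "(\<lambda>n. L + e n) \<longlonglongrightarrow> L + 0" by (intro tendsto_add tendsto_const assms(2))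
  then show "(\<lambda>n. L + e n) \<longlonglongrightarrow> L" by simp
qed

lemma lim0_bound:
  fixes X e :: "nat \<Rightarrow> real"
  assumes "\<And>n. 0 \<le> X n" "\<And>n. X n \<le> e n" "e \<longlonglongrightarrow> 0"
  shows "X \<longlonglongrightarrow> 0"
  by (rule tendsto_sandwich[of "\<lambda>n. 0" _ _ e]) (use assms in auto)

lemma L1_L2_L2: "f \<in> L1_L2 M \<Longrightarrow> f \<in> L2 M"
  by (simp add: L1_L2_def)

lemma L1_L2_diff:
  assumes "f \<in> L1_L2 M" "g \<in> L1_L2 M"
  shows "(\<lambda>x. f x - g x) \<in> L1_L2 M"
proof -
  have "(\<lambda>x. f x - g x) \<in> L2 M" using assms by (intro L2_diff L1_L2_L2)
  moreover have "integrable M (\<lambda>x. f x - g x)" using assms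
    by (intro Bochner_Integration.integrable_diff) (simp_all add: L1_L2_def)
  ultimately show ?thesis by (simp add: L1_L2_def)
qed

context
  fixes \<mu> :: "'g::{ab_group_add, t2_space} measure"
    and \<nu> :: "('g \<Rightarrow> complex) measure"
  assumes PS: "plancherel_setting \<mu> \<nu>"
begin

lemma sets_mu: "sets \<mu> = sets borel"
proof -
  have "radon_measure_on euclidean \<mu>" using PS by (simp add: plancherel_setting_def haar_measure_on_def)
  then have "sets \<mu> = sets (borel_of euclidean)" by (simp add: radon_measure_on_def)
  also have "borel_of euclidean = (borel :: 'g measure)" by (simp add: borel_of_def borel_def)
  finally show ?thesis .
qed

lemma space_nu: "space \<nu> \<subseteq> dual_group"
proof -
  have "radon_measure_on dual_topology \<nu>" using PS by (simp add: plancherel_setting_def haar_measure_on_def)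
  then have "space \<nu> = topspace dual_topology" by (simp add: radon_measure_on_def)
  also have "\<dots> \<subseteq> dual_group" unfolding dual_topology_def topology_generated_by_topspace by blast
  finally show ?thesis .
qed

lemma char_measurable:
  assumes "\<xi> \<in> dual_group" shows "\<xi> \<in> borel_measurable \<mu>"
proof -
  have "continuous_on UNIV \<xi>" using assms by (simp add: dual_group_def)
  then have "\<xi> \<in> borel_measurable borel" by (rule borel_measurable_continuous_onI)
  moreover have "measurable \<mu> (borel :: complex measure) = measurable borel borel"
    by (rule measurable_cong_sets[OF sets_mu refl])
  ultimately show ?thesis by simp
qed

lemma cnj_char_measurable:
  assumes "\<xi> \<in> dual_group" shows "(\<lambda>x. cnj (\<xi> x)) \<in> borel_measurable \<mu>"
proof -
  have "continuous_on UNIV \<xi>" using assms by (simp add: dual_group_def)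
  then have "continuous_on UNIV (\<lambda>x. cnj (\<xi> x))" by (intro continuous_intros)
  then have "(\<lambda>x. cnj (\<xi> x)) \<in> borel_measurable borel" by (rule borel_measurable_continuous_onI)
  moreover have "measurable \<mu> (borel :: complex measure) = measurable borel borel"
    by (rule measurable_cong_sets[OF sets_mu refl])
  ultimately show ?thesis by simp
qed

lemma fourier_integrable:
  assumes "\<xi> \<in> dual_group" "f \<in> L1_L2 \<mu>"
  shows "integrable \<mu> (\<lambda>x. cnj (\<xi> x) * f x)"
proof (rule Bochner_Integration.integrable_bound[of _ f])
  show "integrable \<mu> f" using assms(2) by (simp add: L1_L2_def)
  have "f \<in> borel_measurable \<mu>" using assms(2) by (simp add: L1_L2_def L2_def)
  then show "(\<lambda>x. cnj (\<xi> x) * f x) \<in> borel_measurable \<mu>"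
    by (rule borel_measurable_times[OF cnj_char_measurable[OF assms(1)]])
  have "cmod (\<xi> x) = 1" for x using assms(1) by (simp add: dual_group_def)
  then show "AE x in \<mu>. norm (cnj (\<xi> x) * f x) \<le> norm (f x)"
    by (intro AE_I2) (simp add: norm_mult)
qed

lemma fourier_diff:
  assumes "\<xi> \<in> dual_group" "f \<in> L1_L2 \<mu>" "g \<in> L1_L2 \<mu>"
  shows "fourier \<mu> (\<lambda>x. f x - g x) \<xi> = fourier \<mu> f \<xi> - fourier \<mu> g \<xi>"
proof -
  have "fourier \<mu> (\<lambda>x. f x - g x) \<xi> = (\<integral>x. cnj (\<xi> x) * f x - cnj (\<xi> x) * g x \<partial>\<mu>)"
    by (simp add: fourier_def right_diff_distrib)
  also have "\<dots> = fourier \<mu> f \<xi> - fourier \<mu> g \<xi>"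
    unfolding fourier_def
    by (rule Bochner_Integration.integral_diff[OF fourier_integrable[OF assms(1,2)] fourier_integrable[OF assms(1,3)]])
  finally show ?thesis .
qed

lemma fourier_L2_mem: "f \<in> L1_L2 \<mu> \<Longrightarrow> fourier \<mu> f \<in> L2 \<nu>"
  using PS by (simp add: plancherel_setting_def)

lemma fourier_norm: "f \<in> L1_L2 \<mu> \<Longrightarrow> L2_norm \<nu> (fourier \<mu> f) = L2_norm \<mu> f"
  using PS by (simp add: plancherel_setting_def)

lemma fourier_iso:
  assumes "f \<in> L1_L2 \<mu>" "g \<in> L1_L2 \<mu>"
  shows "d2 \<nu> (fourier \<mu> f) (fourier \<mu> g) = d2 \<mu> f g"
proof -
  have "(\<integral>\<xi>. (cmod (fourier \<mu> f \<xi> - fourier \<mu> g \<xi>))\<^sup>2 \<partial>\<nu>) = (\<integral>\<xi>. (cmod (fourier \<mu> (\<lambda>x. f x - g x) \<xi>))\<^sup>2 \<partial>\<nu>)"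
  proof (rule Bochner_Integration.integral_cong[OF refl])
    fix \<xi> assume "\<xi> \<in> space \<nu>"
    then have "\<xi> \<in> dual_group" using space_nu by blast
    then show "(cmod (fourier \<mu> f \<xi> - fourier \<mu> g \<xi>))\<^sup>2 = (cmod (fourier \<mu> (\<lambda>x. f x - g x) \<xi>))\<^sup>2"
      using fourier_diff[OF _ assms] by simp
  qed
  then have "d2 \<nu> (fourier \<mu> f) (fourier \<mu> g) = L2_norm \<nu> (fourier \<mu> (\<lambda>x. f x - g x))"
    by (simp only: d2_def L2_norm_def)
  also have "\<dots> = L2_norm \<mu> (\<lambda>x. f x - g x)" by (rule fourier_norm[OF L1_L2_diff[OF assms]])
  finally show ?thesis by (simp only: d2_def)
qed

lemma FT_exists:
  assumes g: "g \<in> L2 \<mu>"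
  shows "\<exists>k. fourier_L2 \<mu> \<nu> g k \<and> L2_norm \<nu> k = L2_norm \<mu> g"
proof -
  obtain \<psi>0 where p0: "\<And>n. \<psi>0 n \<in> L1_L2 \<mu>" and d0: "\<And>n. d2 \<mu> (\<psi>0 n) g < (1/2)^n"
    using L2_dense_seq[OF g] by blast
  define \<psi> where "\<psi> n = \<psi>0 (Suc (Suc n))" for n
  have p: "\<psi> n \<in> L1_L2 \<mu>" for n by (simp add: \<psi>_def p0)
  have pL2: "\<psi> n \<in> L2 \<mu>" for n by (rule L1_L2_L2[OF p])
  have dpg: "d2 \<mu> (\<psi> n) g < (1/2)^(Suc (Suc n))" for n unfolding \<psi>_def by (rule d0)
  have dpg0: "(\<lambda>n. d2 \<mu> (\<psi> n) g) \<longlonglongrightarrow> 0"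
  proof (rule lim0_bound[OF d2_nonneg])
    fix n
    have "(1/2::real)^(Suc (Suc n)) \<le> (1/2)^n" by (rule power_decreasing) auto
    then show "d2 \<mu> (\<psi> n) g \<le> (1/2)^n" using dpg[of n] by linarith
  next
    show "(\<lambda>n. (1/2::real)^n) \<longlonglongrightarrow> 0" by (rule LIMSEQ_realpow_zero) auto
  qed
  define s where "s n = fourier \<mu> (\<psi> n)" for n
  have sL2: "s n \<in> L2 \<nu>" for n unfolding s_def by (rule fourier_L2_mem[OF p])
  have sc: "d2 \<nu> (s (Suc n)) (s n) \<le> (1/2)^n" for n
  proof -
    have "d2 \<nu> (s (Suc n)) (s n) = d2 \<mu> (\<psi> (Suc n)) (\<psi> n)" unfolding s_def by (rule fourier_iso[OF p p])
    also have "\<dots> \<le> d2 \<mu> (\<psi> (Suc n)) g + d2 \<mu> g (\<psi> n)" by (rule d2_triangle[OF pL2 g pL2])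
    also have "\<dots> < (1/2)^(Suc (Suc (Suc n))) + (1/2)^(Suc (Suc n))"
      using dpg[of "Suc n"] dpg[of n] d2_sym[of \<mu> g "\<psi> n"] by linarith
    also have "\<dots> \<le> (1/2)^n" by simp
    finally show ?thesis by simp
  qed
  obtain k where kL2: "k \<in> L2 \<nu>" and sk: "(\<lambda>n. d2 \<nu> (s n) k) \<longlonglongrightarrow> 0"
    using L2_complete[OF sL2 sc] by blast
  have FL: "fourier_L2 \<mu> \<nu> g k"
    unfolding fourier_L2_def
  proof (intro conjI allI impI g kL2)
    fix \<phi> :: "nat \<Rightarrow> 'g \<Rightarrow> complex"
    assume \<phi>: "\<forall>n. \<phi> n \<in> L1_L2 \<mu>" and \<phi>lim: "(\<lambda>n. L2_norm \<mu> (\<lambda>x. \<phi> n x - g x)) \<longlonglongrightarrow> 0"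
    have \<phi>L2: "\<phi> n \<in> L2 \<mu>" for n using \<phi> by (simp add: L1_L2_L2)
    have \<phi>lim': "(\<lambda>n. d2 \<mu> (\<phi> n) g) \<longlonglongrightarrow> 0" using \<phi>lim by (simp only: d2_def)
    have "(\<lambda>n. d2 \<nu> (fourier \<mu> (\<phi> n)) k) \<longlonglongrightarrow> 0"
    proof (rule lim0_bound[OF d2_nonneg])
      fix n
      have "d2 \<nu> (fourier \<mu> (\<phi> n)) k \<le> d2 \<nu> (fourier \<mu> (\<phi> n)) (s n) + d2 \<nu> (s n) k"
        by (rule d2_triangle[OF fourier_L2_mem sL2 kL2]) (use \<phi> in simp)
      also have "d2 \<nu> (fourier \<mu> (\<phi> n)) (s n) = d2 \<mu> (\<phi> n) (\<psi> n)"
        unfolding s_def by (rule fourier_iso) (use \<phi> p in simp_all)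
      also have "d2 \<mu> (\<phi> n) (\<psi> n) \<le> d2 \<mu> (\<phi> n) g + d2 \<mu> g (\<psi> n)"
        by (rule d2_triangle[OF \<phi>L2 g pL2])
      finally show "d2 \<nu> (fourier \<mu> (\<phi> n)) k \<le> d2 \<mu> (\<phi> n) g + d2 \<mu> (\<psi> n) g + d2 \<nu> (s n) k"
        using d2_sym[of \<mu> g "\<psi> n"] by linarith
    next
      have "(\<lambda>n. d2 \<mu> (\<phi> n) g + d2 \<mu> (\<psi> n) g + d2 \<nu> (s n) k) \<longlonglongrightarrow> 0 + 0 + 0"
        by (intro tendsto_add \<phi>lim' dpg0 sk)
      then show "(\<lambda>n. d2 \<mu> (\<phi> n) g + d2 \<mu> (\<psi> n) g + d2 \<nu> (s n) k) \<longlonglongrightarrow> 0" by simp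
    qed
    then show "(\<lambda>n. L2_norm \<nu> (\<lambda>\<xi>. fourier \<mu> (\<phi> n) \<xi> - k \<xi>)) \<longlonglongrightarrow> 0" by (simp only: d2_def)
  qed
  have n1: "(\<lambda>n. L2_norm \<nu> (s n)) \<longlonglongrightarrow> L2_norm \<nu> k"
    by (rule lim_by_bound[OF L2_norm_diff_le[OF sL2 kL2] sk])
  have n2: "(\<lambda>n. L2_norm \<nu> (s n)) \<longlonglongrightarrow> L2_norm \<mu> g"
  proof -
    have "(\<lambda>n. L2_norm \<mu> (\<psi> n)) \<longlonglongrightarrow> L2_norm \<mu> g"
      by (rule lim_by_bound[OF L2_norm_diff_le[OF pL2 g] dpg0])
    moreover have "L2_norm \<nu> (s n) = L2_norm \<mu> (\<psi> n)" for n unfolding s_def by (rule fourier_norm[OF p])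
    ultimately show ?thesis by simp
  qed
  have "L2_norm \<nu> k = L2_norm \<mu> g" using n1 n2 by (rule LIMSEQ_unique)
  then show ?thesis using FL by blast
qed

end




context
  fixes \<mu> :: "'g::{ab_group_add, t2_space} measure"
    and \<nu> :: "('g \<Rightarrow> complex) measure"
  assumes PS: "plancherel_setting \<mu> \<nu>"
begin

lemma FT_unique:
  assumes F1: "fourier_L2 \<mu> \<nu> f h1" and F2: "fourier_L2 \<mu> \<nu> f h2"
  shows "AE \<xi> in \<nu>. h1 \<xi> = h2 \<xi>"
proof -
  have f: "f \<in> L2 \<mu>" and h1: "h1 \<in> L2 \<nu>" and h2: "h2 \<in> L2 \<nu>"
    using F1 F2 by (simp_all add: fourier_L2_def)
  obtain \<psi> where p: "\<And>n. \<psi> n \<in> L1_L2 \<mu>" and dp: "\<And>n. d2 \<mu> (\<psi> n) f < (1/2)^n"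
    using L2_dense_seq[OF f] by blast
  have dl: "(\<lambda>n. L2_norm \<mu> (\<lambda>x. \<psi> n x - f x)) \<longlonglongrightarrow> 0"
    using d2_tendsto_geom[of \<mu> \<psi> f] dp by (simp add: d2_def)
  have l1: "(\<lambda>n. d2 \<nu> (fourier \<mu> (\<psi> n)) h1) \<longlonglongrightarrow> 0"
    using F1 p dl unfolding fourier_L2_def d2_def by blast
  have l2: "(\<lambda>n. d2 \<nu> (fourier \<mu> (\<psi> n)) h2) \<longlonglongrightarrow> 0"
    using F2 p dl unfolding fourier_L2_def d2_def by blast
  have "(\<lambda>n. d2 \<nu> (fourier \<mu> (\<psi> n)) h1 + d2 \<nu> (fourier \<mu> (\<psi> n)) h2) \<longlonglongrightarrow> 0 + 0"
    by (intro tendsto_add l1 l2)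
  moreover have "d2 \<nu> h1 h2 \<le> d2 \<nu> (fourier \<mu> (\<psi> n)) h1 + d2 \<nu> (fourier \<mu> (\<psi> n)) h2" for n
  proof -
    have "d2 \<nu> h1 h2 \<le> d2 \<nu> h1 (fourier \<mu> (\<psi> n)) + d2 \<nu> (fourier \<mu> (\<psi> n)) h2"
      by (rule d2_triangle[OF h1 fourier_L2_mem[OF PS p] h2])
    then show ?thesis using d2_sym[of \<nu> h1 "fourier \<mu> (\<psi> n)"] by simp
  qed
  ultimately have "d2 \<nu> h1 h2 \<le> 0 + 0" by (intro LIMSEQ_le_const) auto
  then have "d2 \<nu> h1 h2 = 0" using d2_nonneg[of \<nu> h1 h2] by simp
  then show ?thesis by (rule d2_zero_AE[OF h1 h2])
qed

lemma FT_inj: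
  assumes F1: "fourier_L2 \<mu> \<nu> f1 h1" and F2: "fourier_L2 \<mu> \<nu> f2 h2"
    and AEh: "AE \<xi> in \<nu>. h1 \<xi> = h2 \<xi>"
  shows "AE x in \<mu>. f1 x = f2 x"
proof -
  have f1: "f1 \<in> L2 \<mu>" and h1: "h1 \<in> L2 \<nu>" and f2: "f2 \<in> L2 \<mu>" and h2: "h2 \<in> L2 \<nu>"
    using F1 F2 by (simp_all add: fourier_L2_def)
  obtain \<psi> where p: "\<And>n. \<psi> n \<in> L1_L2 \<mu>" and dp: "\<And>n. d2 \<mu> (\<psi> n) f1 < (1/2)^n"
    using L2_dense_seq[OF f1] by blast
  obtain \<rho> where q: "\<And>n. \<rho> n \<in> L1_L2 \<mu>" and dq: "\<And>n. d2 \<mu> (\<rho> n) f2 < (1/2)^n"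
    using L2_dense_seq[OF f2] by blast
  have pL2: "\<psi> n \<in> L2 \<mu>" for n by (rule L1_L2_L2[OF p])
  have qL2: "\<rho> n \<in> L2 \<mu>" for n by (rule L1_L2_L2[OF q])
  have dp0: "(\<lambda>n. d2 \<mu> (\<psi> n) f1) \<longlonglongrightarrow> 0" using d2_tendsto_geom[of \<mu> \<psi> f1] dp by simp
  have dq0: "(\<lambda>n. d2 \<mu> (\<rho> n) f2) \<longlonglongrightarrow> 0" using d2_tendsto_geom[of \<mu> \<rho> f2] dq by simp
  have l1: "(\<lambda>n. d2 \<nu> (fourier \<mu> (\<psi> n)) h1) \<longlonglongrightarrow> 0"
    using F1 p dp0 unfolding fourier_L2_def d2_def by blast
  have l2: "(\<lambda>n. d2 \<nu> (fourier \<mu> (\<rho> n)) h2) \<longlonglongrightarrow> 0"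
    using F2 q dq0 unfolding fourier_L2_def d2_def by blast
  have bound: "d2 \<mu> f1 f2 \<le> d2 \<mu> (\<psi> n) f1 + (d2 \<nu> (fourier \<mu> (\<psi> n)) h1 + d2 \<nu> (fourier \<mu> (\<rho> n)) h2) + d2 \<mu> (\<rho> n) f2" for n
  proof -
    have Fp: "fourier \<mu> (\<psi> n) \<in> L2 \<nu>" by (rule fourier_L2_mem[OF PS p])
    have Fq: "fourier \<mu> (\<rho> n) \<in> L2 \<nu>" by (rule fourier_L2_mem[OF PS q])
    have "d2 \<mu> f1 f2 \<le> d2 \<mu> f1 (\<psi> n) + d2 \<mu> (\<psi> n) f2" by (rule d2_triangle[OF f1 pL2 f2])
    also have "d2 \<mu> (\<psi> n) f2 \<le> d2 \<mu> (\<psi> n) (\<rho> n) + d2 \<mu> (\<rho> n) f2" by (rule d2_triangle[OF pL2 qL2 f2])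
    also have "d2 \<mu> (\<psi> n) (\<rho> n) = d2 \<nu> (fourier \<mu> (\<psi> n)) (fourier \<mu> (\<rho> n))"
      by (rule fourier_iso[OF PS p q, symmetric])
    also have "\<dots> \<le> d2 \<nu> (fourier \<mu> (\<psi> n)) h1 + d2 \<nu> h1 (fourier \<mu> (\<rho> n))"
      by (rule d2_triangle[OF Fp h1 Fq])
    also have "d2 \<nu> h1 (fourier \<mu> (\<rho> n)) = d2 \<nu> h2 (fourier \<mu> (\<rho> n))"
      by (rule d2_AE_cong[OF h1 h2 Fq AEh])
    also have "\<dots> = d2 \<nu> (fourier \<mu> (\<rho> n)) h2" by (rule d2_sym)
    finally show ?thesis using d2_sym[of \<mu> f1 "\<psi> n"] by simp
  qed
  have "(\<lambda>n. d2 \<mu> (\<psi> n) f1 + (d2 \<nu> (fourier \<mu> (\<psi> n)) h1 + d2 \<nu> (fourier \<mu> (\<rho> n)) h2) + d2 \<mu> (\<rho> n) f2) \<longlonglongrightarrow> 0 + (0 + 0) + 0"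
    by (intro tendsto_add dp0 dq0 l1 l2)
  then have "d2 \<mu> f1 f2 \<le> 0 + (0 + 0) + 0" by (rule LIMSEQ_le_const) (use bound in auto)
  then have "d2 \<mu> f1 f2 = 0" using d2_nonneg[of \<mu> f1 f2] by simp
  then show ?thesis by (rule d2_zero_AE[OF f1 f2])
qed

end




theorem theorem5:
  fixes \<mu> :: "'g::{ab_group_add, t2_space} measure"
    and \<nu> :: "('g \<Rightarrow> complex) measure"
    and \<gamma> :: "('g \<Rightarrow> complex) \<Rightarrow> real"
    and c :: real and g :: "'g \<Rightarrow> complex"
  assumes "plancherel_setting \<mu> \<nu>"
    and "\<gamma> \<in> Gamma_class"
    and "\<gamma> \<in> borel_measurable \<nu>"
    and "c > 0"
    and "g \<in> L2 \<mu>"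
  shows "\<exists>u. Lc_solves \<mu> \<nu> \<gamma> c u g \<and>
             (\<forall>v. Lc_solves \<mu> \<nu> \<gamma> c v g \<longrightarrow> (AE x in \<mu>. v x = u x)) \<and>
             H_norm \<mu> \<nu> \<gamma> c u = L2_norm \<mu> g"
proof -
  note PS = assms(1)
  have gm: "\<gamma> \<in> borel_measurable \<nu>" by (rule assms(3))
  have g: "g \<in> L2 \<mu>" by (rule assms(5))
  obtain k where Fk: "fourier_L2 \<mu> \<nu> g k" and nk: "L2_norm \<nu> k = L2_norm \<mu> g"
    using FT_exists[OF PS g] by blast
  have kL2: "k \<in> L2 \<nu>" using Fk by (simp add: fourier_L2_def)
  have km: "k \<in> borel_measurable \<nu>" using kL2 by (simp only: L2_def mem_Collect_eq)
  have ki: "integrable \<nu> (\<lambda>\<xi>. (cmod (k \<xi>))\<^sup>2)" using kL2 by (simp only: L2_def mem_Collect_eq)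
  have w1: "weight \<gamma> c \<xi> \<ge> 1" for \<xi> unfolding weight_def by simp
  have wpos: "weight \<gamma> c \<xi> > 0" for \<xi> using w1[of \<xi>] by simp
  have wm: "(\<lambda>\<xi>. weight \<gamma> c \<xi>) \<in> borel_measurable \<nu>" unfolding weight_def using gm by measurable
  have wcm: "(\<lambda>\<xi>. complex_of_real (weight \<gamma> c \<xi>)) \<in> borel_measurable \<nu>" using wm by measurable
  define h where "h \<xi> = - k \<xi> / complex_of_real (weight \<gamma> c \<xi>)" for \<xi>
  have hm: "h \<in> borel_measurable \<nu>" unfolding h_def using km wcm by measurable
  have hk: "(cmod (h \<xi>))\<^sup>2 \<le> (cmod (k \<xi>))\<^sup>2" for \<xi>
  proof -
    have "cmod (h \<xi>) = cmod (k \<xi>) / weight \<gamma> c \<xi>"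
      using wpos[of \<xi>] by (simp add: h_def norm_divide)
    also have "\<dots> \<le> cmod (k \<xi>)" using w1[of \<xi>] by (simp add: divide_le_eq mult_le_cancel_left1 order_trans[OF _ mult_right_mono[of 1 "weight \<gamma> c \<xi>"]])
    finally show ?thesis by (simp add: power_mono)
  qed
  have hL2: "h \<in> L2 \<nu>"
  proof -
    have "integrable \<nu> (\<lambda>\<xi>. (cmod (h \<xi>))\<^sup>2)"
    proof (rule Bochner_Integration.integrable_bound[OF ki])
      show "(\<lambda>\<xi>. (cmod (h \<xi>))\<^sup>2) \<in> borel_measurable \<nu>" using hm by measurable
      show "AE \<xi> in \<nu>. norm ((cmod (h \<xi>))\<^sup>2) \<le> norm ((cmod (k \<xi>))\<^sup>2)" by (intro AE_I2) (simp add: hk)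
    qed
    then show ?thesis using hm by (simp only: L2_def mem_Collect_eq simp_thms)
  qed
  obtain u where Fu: "fourier_L2 \<mu> \<nu> u h"
    using PS hL2 unfolding plancherel_setting_def by blast
  have wh_eq: "(\<lambda>\<xi>. - complex_of_real (weight \<gamma> c \<xi>) * h \<xi>) = k"
  proof
    fix \<xi> show "- complex_of_real (weight \<gamma> c \<xi>) * h \<xi> = k \<xi>"
      using wpos[of \<xi>] by (simp add: h_def)
  qed
  have wh_sq: "(\<lambda>\<xi>. (weight \<gamma> c \<xi>)\<^sup>2 * (cmod (h \<xi>))\<^sup>2) = (\<lambda>\<xi>. (cmod (k \<xi>))\<^sup>2)"
  proof
    fix \<xi>
    have "cmod (k \<xi>) = cmod (- complex_of_real (weight \<gamma> c \<xi>) * h \<xi>)" using wh_eq by (simp add: fun_eq_iff)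
    also have "\<dots> = weight \<gamma> c \<xi> * cmod (h \<xi>)" using wpos[of \<xi>] by (simp add: norm_mult)
    finally show "(weight \<gamma> c \<xi>)\<^sup>2 * (cmod (h \<xi>))\<^sup>2 = (cmod (k \<xi>))\<^sup>2" by (simp add: power_mult_distrib)
  qed
  have uL2: "u \<in> L2 \<mu>" using Fu by (simp add: fourier_L2_def)
  have uH: "u \<in> H_space \<mu> \<nu> \<gamma> c"
    unfolding H_space_def using uL2 Fu ki wh_sq by auto
  have Lu: "Lc_solves \<mu> \<nu> \<gamma> c u g"
    unfolding Lc_solves_def using uH Fu Fk wh_eq by auto
  have uniq: "AE x in \<mu>. v x = u x" if Lv: "Lc_solves \<mu> \<nu> \<gamma> c v g" for v
  proof -
    obtain h' where Fv: "fourier_L2 \<mu> \<nu> v h'"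
      and Fg': "fourier_L2 \<mu> \<nu> g (\<lambda>\<xi>. - complex_of_real (weight \<gamma> c \<xi>) * h' \<xi>)"
      using Lv unfolding Lc_solves_def by blast
    have "AE \<xi> in \<nu>. - complex_of_real (weight \<gamma> c \<xi>) * h' \<xi> = k \<xi>"
      by (rule FT_unique[OF PS Fg' Fk])
    then have "AE \<xi> in \<nu>. h' \<xi> = h \<xi>"
    proof eventually_elim
      case (elim \<xi>)
      have w0: "complex_of_real (weight \<gamma> c \<xi>) \<noteq> 0" using wpos[of \<xi>] by simp
      from elim have "h' \<xi> * complex_of_real (weight \<gamma> c \<xi>) = - k \<xi>"
        by (metis minus_equation_iff mult.commute mult_minus_left)
      then have "h' \<xi> = - k \<xi> / complex_of_real (weight \<gamma> c \<xi>)"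
        using w0 by (metis nonzero_mult_div_cancel_right)
      then show ?case by (simp add: h_def)
    qed
    then show ?thesis by (rule FT_inj[OF PS Fv Fu])
  qed
  have norm: "H_norm \<mu> \<nu> \<gamma> c u = L2_norm \<mu> g"
  proof -
    define H where "H = (SOME h. fourier_L2 \<mu> \<nu> u h)"
    have FH: "fourier_L2 \<mu> \<nu> u H" unfolding H_def using Fu by (rule someI[where P="fourier_L2 \<mu> \<nu> u"])
    have HL2: "H \<in> L2 \<nu>" using FH by (simp add: fourier_L2_def)
    have Hm: "H \<in> borel_measurable \<nu>" using HL2 by (simp only: L2_def mem_Collect_eq)
    have AEH: "AE \<xi> in \<nu>. H \<xi> = h \<xi>" by (rule FT_unique[OF PS FH Fu])
    have "(\<integral>\<xi>. (weight \<gamma> c \<xi>)\<^sup>2 * (cmod (H \<xi>))\<^sup>2 \<partial>\<nu>) = (\<integral>\<xi>. (weight \<gamma> c \<xi>)\<^sup>2 * (cmod (h \<xi>))\<^sup>2 \<partial>\<nu>)"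
    proof (rule integral_cong_AE)
      show "(\<lambda>\<xi>. (weight \<gamma> c \<xi>)\<^sup>2 * (cmod (H \<xi>))\<^sup>2) \<in> borel_measurable \<nu>" using wm Hm by measurable
      show "(\<lambda>\<xi>. (weight \<gamma> c \<xi>)\<^sup>2 * (cmod (h \<xi>))\<^sup>2) \<in> borel_measurable \<nu>" using wm hm by measurable
      show "AE \<xi> in \<nu>. (weight \<gamma> c \<xi>)\<^sup>2 * (cmod (H \<xi>))\<^sup>2 = (weight \<gamma> c \<xi>)\<^sup>2 * (cmod (h \<xi>))\<^sup>2"
        using AEH by eventually_elim simp
    qed
    also have "\<dots> = (\<integral>\<xi>. (cmod (k \<xi>))\<^sup>2 \<partial>\<nu>)" by (simp only: wh_sq)
    finally have "H_norm \<mu> \<nu> \<gamma> c u = L2_norm \<nu> k"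
      by (simp only: H_norm_def H_def[symmetric] L2_norm_def)
    then show ?thesis using nk by simp
  qed
  show ?thesis using Lu uniq norm by blast
qed


end
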